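(* Let $\mathbf{k}$ be a commutative ring, $n\ge 0$, and $\mathcal{A}=\mathbf{k}[S_n]$. If $\alpha,\beta\in\operatorname{Comp}_n$ are anagrams (that is, $\widetilde{\alpha}=\widetilde{\beta}$), then $\mathcal{R}_\alpha=\mathcal{R}_\beta$.
   Context: $S_n$ is the symmetric group on $[n]=\{1,\dots,n\}$, with product $(uw)(i)=u(w(i))$. For $w\in S_n$, $\operatorname{Des}(w)=\{i\in[n-1]: w(i)>w(i+1)\}$. For $I\subseteq[n-1]$, $\mathbf{B}_I=\sum_{w\in S_n,\ \operatorname{Des}(w)\subseteq I} w\in\mathcal{A}$. A composition $\alpha=(\alpha_1,\dots,\alpha_p)$ of $n$ is a finite sequence of positive integers with sum $n$; $\operatorname{Comp}_n$ is the set of these. $\operatorname{Set}(\alpha)=\{\alpha_1,\alpha_1+\alpha_2,\dots,\alpha_1+\cdots+\alpha_{p-1}\}\subseteq[n-1]$, and $\mathbf{B}_\alpha:=\mathbf{B}_{\operatorname{Set}(\alpha)}$. The underlying partition $\widetilde{\alpha}$ is obtained by sorting the parts of $\alpha$ in weakly decreasing order; $\alpha,\beta$ are anagrams if $\widetilde\alpha=\widetilde\beta$. For $\beta\in\operatorname{Comp}_n$, $\mathcal{R}_\beta:=\mathbf{B}_\beta\mathcal{A}$ (a right ideal of $\mathcal{A}$). *)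

theory Defs
  imports "HOL-Combinatorics.Permutations"
begin

definition Sym :: "nat \<Rightarrow> (nat \<Rightarrow> nat) set" where
  "Sym n = {p. p permutes {1..n}}"

definition grp_alg :: "nat \<Rightarrow> ((nat \<Rightarrow> nat) \<Rightarrow> 'k::comm_ring_1) set" where
  "grp_alg n = {f. \<forall>p. p \<notin> Sym n \<longrightarrow> f p = 0}"

text \<open>Multiplication in k[S_n], with (u w)(i) = u (w i), i.e. u w = u \<circ> w.\<close>
definition alg_mult :: "nat \<Rightarrow> ((nat \<Rightarrow> nat) \<Rightarrow> 'k::comm_ring_1) \<Rightarrow> ((nat \<Rightarrow> nat) \<Rightarrow> 'k) \<Rightarrow> ((nat \<Rightarrow> nat) \<Rightarrow> 'k)" where
  "alg_mult n a b = (\<lambda>w. \<Sum>(u, v) \<in> {(u, v). u \<in> Sym n \<and> v \<in> Sym n \<and> u \<circ> v = w}. a u * b v)"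

definition Des :: "nat \<Rightarrow> (nat \<Rightarrow> nat) \<Rightarrow> nat set" where
  "Des n w = {i \<in> {1..<n}. w i > w (i + 1)}"

definition BI :: "nat \<Rightarrow> nat set \<Rightarrow> ((nat \<Rightarrow> nat) \<Rightarrow> 'k::comm_ring_1)" where
  "BI n I = (\<lambda>w. if w \<in> Sym n \<and> Des n w \<subseteq> I then 1 else 0)"

definition Comp :: "nat \<Rightarrow> nat list set" where
  "Comp n = {\<alpha>. (\<forall>a \<in> set \<alpha>. 0 < a) \<and> sum_list \<alpha> = n}"

definition SetC :: "nat list \<Rightarrow> nat set" where
  "SetC \<alpha> = {sum_list (take j \<alpha>) | j. 1 \<le> j \<and> j < length \<alpha>}"

definition underlying_partition :: "nat list \<Rightarrow> nat list" where
  "underlying_partition \<alpha> = rev (sort \<alpha>)"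

definition B_comp :: "nat \<Rightarrow> nat list \<Rightarrow> ((nat \<Rightarrow> nat) \<Rightarrow> 'k::comm_ring_1)" where
  "B_comp n \<alpha> = BI n (SetC \<alpha>)"

definition R_ideal :: "nat \<Rightarrow> nat list \<Rightarrow> ((nat \<Rightarrow> nat) \<Rightarrow> 'k::comm_ring_1) set" where
  "R_ideal n \<beta> = {alg_mult n (B_comp n \<beta>) x | x. x \<in> grp_alg n}"

end

theory Submission
  imports Defs
begin

definition good :: "nat \<Rightarrow> nat list \<Rightarrow> nat list \<Rightarrow> (nat \<Rightarrow> nat) \<Rightarrow> bool" where
  "good n a b s \<longleftrightarrow> s permutes {1..n} \<and>
     (\<forall>w. w permutes {1..n} \<longrightarrow> (Des n w \<subseteq> SetC a \<longleftrightarrow> Des n (w \<circ> s) \<subseteq> SetC b))"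

lemma good_refl: "good n a a id"
  unfolding good_def by (simp add: permutes_id)

lemma good_trans:
  assumes "good n a c s1" "good n c b s2" shows "good n a b (s1 \<circ> s2)"
proof -
  have "s1 \<circ> s2 permutes {1..n}" using assms unfolding good_def by (simp add: permutes_compose)
  moreover have "Des n w \<subseteq> SetC a \<longleftrightarrow> Des n (w \<circ> (s1 \<circ> s2)) \<subseteq> SetC b" if "w permutes {1..n}" for w
  proof -
    have "w \<circ> s1 permutes {1..n}" using assms that unfolding good_def by (simp add: permutes_compose)
    then show ?thesis using assms that unfolding good_def by (simp add: o_assoc)
  qed
  ultimately show ?thesis unfolding good_def by blast
qed

lemma R_sub:
  assumes "good n a b s"
  shows "(R_ideal n b :: ((nat \<Rightarrow> nat) \<Rightarrow> 'k::comm_ring_1) set) \<subseteq> R_ideal n a"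
proof
  fix z :: "(nat \<Rightarrow> nat) \<Rightarrow> 'k"
  assume "z \<in> R_ideal n b"
  then obtain x where x: "x \<in> grp_alg n" and z: "z = alg_mult n (B_comp n b) x"
    unfolding R_ideal_def by blast
  have sp: "s permutes {1..n}" using assms unfolding good_def by blast
  have si: "inv s permutes {1..n}" using sp by (rule permutes_inv)
  have o1: "s \<circ> inv s = id" and o2: "inv s \<circ> s = id" using permutes_inv_o[OF sp] by auto
  define y where "y = (\<lambda>v. x (inv s \<circ> v))"
  have y: "y \<in> grp_alg n"
    unfolding grp_alg_def mem_Collect_eq
  proof (intro allI impI)
    fix v assume v: "v \<notin> Sym n"
    have "inv s \<circ> v \<notin> Sym n"
    proof
      assume "inv s \<circ> v \<in> Sym n"
      then have "s \<circ> (inv s \<circ> v) \<in> Sym n" using sp unfolding Sym_def by (simp add: permutes_compose)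
      then show False using v o1 by (simp add: o_assoc)
    qed
    then show "y v = 0" using x unfolding grp_alg_def y_def by blast
  qed
  have BB: "(B_comp n b :: (nat \<Rightarrow> nat) \<Rightarrow> 'k) (u \<circ> s) = B_comp n a u" if "u \<in> Sym n" for u
  proof -
    have "u \<circ> s \<in> Sym n" using that sp unfolding Sym_def by (simp add: permutes_compose)
    then show ?thesis using that assms unfolding B_comp_def BI_def good_def Sym_def by auto
  qed
  have "alg_mult n (B_comp n b) x = (alg_mult n (B_comp n a) y :: (nat \<Rightarrow> nat) \<Rightarrow> 'k)"
  proof
    fix w
    let ?P = "{(u, v). u \<in> Sym n \<and> v \<in> Sym n \<and> u \<circ> v = w}"
    have "(\<Sum>(u, v)\<in>?P. B_comp n a u * y v) = (\<Sum>(u, v)\<in>?P. (B_comp n b u * x v :: 'k))"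
    proof (rule sum.reindex_bij_witness[where j = "\<lambda>(u,v). (u \<circ> s, inv s \<circ> v)"
          and i = "\<lambda>(u,v). (u \<circ> inv s, s \<circ> v)"])
      fix c assume "c \<in> ?P"
      then show "(\<lambda>(u,v). (u \<circ> inv s, s \<circ> v)) ((\<lambda>(u,v). (u \<circ> s, inv s \<circ> v)) c) = c"
        by (auto simp: o_assoc[symmetric] o1 o2) (simp add: o_assoc o1)
    next
      fix c assume "c \<in> ?P"
      then show "(\<lambda>(u,v). (u \<circ> s, inv s \<circ> v)) c \<in> ?P"
        using sp si unfolding Sym_def
        by (auto simp: permutes_compose) (metis o_assoc o1 comp_id)
    next
      fix c assume "c \<in> ?P"
      then show "(\<lambda>(u,v). (u \<circ> s, inv s \<circ> v)) ((\<lambda>(u,v). (u \<circ> inv s, s \<circ> v)) c) = c"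
        by (auto simp: o_assoc[symmetric] o1 o2) (simp add: o_assoc o2)
    next
      fix c assume "c \<in> ?P"
      then show "(\<lambda>(u,v). (u \<circ> inv s, s \<circ> v)) c \<in> ?P"
        using sp si unfolding Sym_def
        by (auto simp: permutes_compose) (metis o_assoc o2 comp_id)
    next
      fix c assume "c \<in> ?P"
      then show "(case (\<lambda>(u,v). (u \<circ> s, inv s \<circ> v)) c of (u, v) \<Rightarrow> B_comp n b u * x v) =
          (case c of (u, v) \<Rightarrow> B_comp n a u * y v)"
        using BB by (auto simp: y_def)
    qed
    then show "alg_mult n (B_comp n b) x w = alg_mult n (B_comp n a) y w"
      unfolding alg_mult_def by simp
  qed
  then show "z \<in> R_ideal n a" using z y unfolding R_ideal_def by blast
qed

definition TT :: "nat list \<Rightarrow> nat \<Rightarrow> nat list \<Rightarrow> nat set" where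
  "TT g1 s g2 = {sum_list (take j g1) | j. 1 \<le> j \<and> j \<le> length g1}
     \<union> {sum_list g1 + s + sum_list (take k g2) | k. k < length g2}"

lemma take_app_len: "take (length g1 + m) (g1 @ r) = g1 @ take m r"
  by simp

lemma SetC_split: "SetC (g1 @ x # y # g2) = insert (sum_list g1 + x) (TT g1 (x+y) g2)"
proof (rule set_eqI)
  fix i
  let ?L = "length g1"
  show "i \<in> SetC (g1 @ x # y # g2) \<longleftrightarrow> i \<in> insert (sum_list g1 + x) (TT g1 (x+y) g2)"
  proof
    assume "i \<in> SetC (g1 @ x # y # g2)"
    then obtain j where j: "1 \<le> j" "j < length (g1 @ x # y # g2)" "i = sum_list (take j (g1 @ x # y # g2))"
      unfolding SetC_def by blast
    consider "j \<le> ?L" | "j = ?L + 1" | k where "j = ?L + 2 + k" by (metis add_Suc_right le_Suc_ex not_less_eq_eq one_add_one add_Suc_shift Suc_eq_plus1 nat_less_le le_less_Suc_eq not_le)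
    then show "i \<in> insert (sum_list g1 + x) (TT g1 (x+y) g2)"
    proof cases
      case 1
      then have "i = sum_list (take j g1)" using j by simp
      then show ?thesis using 1 j unfolding TT_def by blast
    next
      case 2
      then have "take j (g1 @ x # y # g2) = g1 @ [x]" by simp
      then show ?thesis using j by simp
    next
      case 3
      then have "take j (g1 @ x # y # g2) = g1 @ x # y # take k g2"
        using take_app_len[of g1 "2+k" "x # y # g2"] by (simp add: numeral_2_eq_2)
      then have "i = sum_list g1 + (x + y) + sum_list (take k g2)" using j by simp
      moreover have "k < length g2" using j 3 by simp
      ultimately show ?thesis unfolding TT_def by blast
    qed
  next
    assume "i \<in> insert (sum_list g1 + x) (TT g1 (x+y) g2)"
    then consider "i = sum_list g1 + x" | j where "1 \<le> j" "j \<le> ?L" "i = sum_list (take j g1)"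
      | k where "k < length g2" "i = sum_list g1 + (x + y) + sum_list (take k g2)"
      unfolding TT_def by blast
    then show "i \<in> SetC (g1 @ x # y # g2)"
    proof cases
      case 1
      have "take (?L + 1) (g1 @ x # y # g2) = g1 @ [x]" by simp
      then show ?thesis unfolding SetC_def using 1
        by (intro CollectI exI[of _ "?L + 1"]) simp
    next
      case (2 j)
      then show ?thesis unfolding SetC_def
        by (intro CollectI exI[of _ j]) simp
    next
      case (3 k)
      have "take (?L + (2 + k)) (g1 @ x # y # g2) = g1 @ x # y # take k g2"
        using take_app_len[of g1 "2+k" "x # y # g2"] by (simp add: numeral_2_eq_2)
      then show ?thesis unfolding SetC_def using 3
        by (intro CollectI exI[of _ "?L + (2 + k)"]) simp
    qed
  qed
qed

lemma sum_take_le: "sum_list (take j xs) \<le> sum_list (xs::nat list)"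
  by (metis append_take_drop_id sum_list_append le_add1)

lemma TT_out: "t \<in> TT g1 s g2 \<Longrightarrow> t \<le> sum_list g1 \<or> sum_list g1 + s \<le> t"
  unfolding TT_def using sum_take_le by fastforce

lemma TT_p: "g1 \<noteq> [] \<Longrightarrow> sum_list g1 \<in> TT g1 s g2"
  unfolding TT_def by (rule UnI1, rule CollectI, rule exI[of _ "length g1"]) (simp add: Suc_leI)

lemma TT_q: "g2 \<noteq> [] \<Longrightarrow> sum_list g1 + s \<in> TT g1 s g2"
  unfolding TT_def by (rule UnI2, rule CollectI, rule exI[of _ 0]) simp

definition swp :: "nat \<Rightarrow> nat \<Rightarrow> nat \<Rightarrow> nat \<Rightarrow> nat" where
  "swp p x y i = (if p < i \<and> i \<le> p + y then i + x else if p + y < i \<and> i \<le> p + x + y then i - y else i)"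

lemma swp_inv: "swp p y x (swp p x y i) = i"
  unfolding swp_def by auto

lemma key:
  assumes "sum_list (g1 @ x # y # g2) = n" "1 \<le> i" "i < n" "i \<notin> SetC (g1 @ y # x # g2)"
  shows "swp (sum_list g1) x y (i+1) = swp (sum_list g1) x y i + 1 \<and>
         swp (sum_list g1) x y i \<notin> SetC (g1 @ x # y # g2)"
proof -
  let ?p = "sum_list g1"
  let ?T = "TT g1 (x+y) g2"
  have B: "i \<notin> insert (?p + y) ?T" using assms(4) SetC_split[of g1 y x g2] by (simp add: add.commute)
  have A: "SetC (g1 @ x # y # g2) = insert (?p + x) ?T" by (rule SetC_split)
  have ne_p: "i \<noteq> ?p"
  proof
    assume "i = ?p"
    then have "g1 \<noteq> []" using assms(2) by auto
    then show False using TT_p[of g1 "x+y" g2] B \<open>i = ?p\<close> by simp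
  qed
  have ne_q: "i \<noteq> ?p + x + y"
  proof
    assume e: "i = ?p + x + y"
    have "g2 \<noteq> []" using e assms(1,3) by auto
    then show False using TT_q[of g2 g1 "x+y"] B e by (simp add: add.assoc)
  qed
  have ne_py: "i \<noteq> ?p + y" using B by simp
  have iT: "i \<notin> ?T" using B by simp
  have s1: "swp ?p x y (i+1) = swp ?p x y i + 1"
    using ne_p ne_q ne_py unfolding swp_def by auto
  have s2: "swp ?p x y i \<noteq> ?p + x"
    using ne_p ne_q ne_py unfolding swp_def by auto
  have s3: "swp ?p x y i \<notin> ?T"
  proof
    assume inT: "swp ?p x y i \<in> ?T"
    show False
    proof (cases "?p < i \<and> i < ?p + x + y")
      case True
      then have "?p < swp ?p x y i \<and> swp ?p x y i < ?p + (x + y)"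
        using ne_py unfolding swp_def by auto
      then show False using TT_out[OF inT] by auto
    next
      case False
      then have "swp ?p x y i = i" using ne_q unfolding swp_def by auto
      then show False using inT iT by simp
    qed
  qed
  show ?thesis using s1 s2 s3 A by simp
qed

lemma des_transfer:
  assumes "s permutes {1..n}"
    and "\<And>i. 1 \<le> i \<Longrightarrow> i < n \<Longrightarrow> i \<notin> B \<Longrightarrow> s (i+1) = s i + 1 \<and> s i \<notin> A"
    and "Des n w \<subseteq> A"
  shows "Des n (w \<circ> s) \<subseteq> B"
proof
  fix i assume i: "i \<in> Des n (w \<circ> s)"
  then have i1: "1 \<le> i" "i < n" "w (s i) > w (s (i+1))" unfolding Des_def by auto
  show "i \<in> B"
  proof (rule ccontr)
    assume "i \<notin> B"
    then have e: "s (i+1) = s i + 1" "s i \<notin> A" using assms(2) i1 by auto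
    have "s i \<in> {1..n}" using permutes_in_image[OF assms(1)] i1 by simp
    moreover have "s (i+1) \<in> {1..n}" using permutes_in_image[OF assms(1)] i1 by simp
    ultimately have "s i \<in> Des n w" using e i1 unfolding Des_def by auto
    then show False using e assms(3) by blast
  qed
qed

lemma swp_permutes:
  assumes "sum_list g1 + x + y \<le> n"
  shows "swp (sum_list g1) x y permutes {1..n}"
  unfolding permutes_def
proof (intro conjI allI impI)
  fix i :: nat assume "i \<notin> {1..n}"
  then show "swp (sum_list g1) x y i = i" using assms unfolding swp_def by auto
next
  fix j
  show "\<exists>!i. swp (sum_list g1) x y i = j"
    by (rule ex1I[of _ "swp (sum_list g1) y x j"]) (metis swp_inv)+
qed

lemma good_swap:
  assumes "sum_list (g1 @ x # y # g2) = n"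
  shows "good n (g1 @ x # y # g2) (g1 @ y # x # g2) (swp (sum_list g1) x y)"
proof -
  let ?s = "swp (sum_list g1) x y"
  let ?t = "swp (sum_list g1) y x"
  have sp: "?s permutes {1..n}" using assms by (intro swp_permutes) simp
  have tp: "?t permutes {1..n}" using assms by (intro swp_permutes) simp
  have st: "?s \<circ> ?t = id" by (rule ext) (simp add: swp_inv)
  have assms2: "sum_list (g1 @ y # x # g2) = n" using assms by simp
  have "Des n w \<subseteq> SetC (g1 @ x # y # g2) \<longleftrightarrow> Des n (w \<circ> ?s) \<subseteq> SetC (g1 @ y # x # g2)" for w
  proof
    assume h: "Des n w \<subseteq> SetC (g1 @ x # y # g2)"
    show "Des n (w \<circ> ?s) \<subseteq> SetC (g1 @ y # x # g2)"
      by (rule des_transfer[OF sp _ h]) (use key[OF assms] in auto)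
  next
    assume h: "Des n (w \<circ> ?s) \<subseteq> SetC (g1 @ y # x # g2)"
    have "Des n (w \<circ> ?s \<circ> ?t) \<subseteq> SetC (g1 @ x # y # g2)"
      by (rule des_transfer[OF tp _ h]) (use key[OF assms2] in auto)
    then show "Des n w \<subseteq> SetC (g1 @ x # y # g2)" by (simp add: o_assoc[symmetric] st del: o_apply)
  qed
  then show ?thesis using sp unfolding good_def by blast
qed

lemma good_move:
  "sum_list (g1 @ a # b1 @ b2) = n \<Longrightarrow> \<exists>s. good n (g1 @ a # b1 @ b2) (g1 @ b1 @ a # b2) s"
proof (induction b1 arbitrary: g1)
  case Nil
  then show ?case using good_refl by auto
next
  case (Cons b b1)
  have 1: "good n (g1 @ a # b # (b1 @ b2)) (g1 @ b # a # (b1 @ b2)) (swp (sum_list g1) a b)"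
    using Cons.prems by (intro good_swap) simp
  have "sum_list ((g1 @ [b]) @ a # b1 @ b2) = n" using Cons.prems by simp
  then obtain s where "good n ((g1 @ [b]) @ a # b1 @ b2) ((g1 @ [b]) @ b1 @ a # b2) s"
    using Cons.IH by blast
  then have "good n (g1 @ b # a # b1 @ b2) (g1 @ b # b1 @ a # b2) s" by simp
  then show ?case using good_trans[OF 1] by auto
qed

lemma good_mset:
  "mset al = mset bl \<Longrightarrow> sum_list (g1 @ al) = n \<Longrightarrow> \<exists>s. good n (g1 @ al) (g1 @ bl) s"
proof (induction al arbitrary: g1 bl)
  case Nil
  then show ?case using good_refl by auto
next
  case (Cons a al)
  then have "a \<in> set bl" by (metis list.set_intros(1) set_mset_mset)
  then obtain b1 b2 where bl: "bl = b1 @ a # b2" by (meson split_list)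
  have m: "mset al = mset (b1 @ b2)" using Cons.prems(1) bl by simp
  have "sum_list ((g1 @ [a]) @ al) = n" using Cons.prems(2) by simp
  then obtain s1 where s1: "good n ((g1 @ [a]) @ al) ((g1 @ [a]) @ b1 @ b2) s1"
    using Cons.IH[OF m] by blast
  have "sum_list al = sum_list (b1 @ b2)" using m by (metis sum_mset_sum_list)
  then have "sum_list (g1 @ a # b1 @ b2) = n" using Cons.prems(2) by simp
  then obtain s2 where s2: "good n (g1 @ a # b1 @ b2) (g1 @ b1 @ a # b2) s2"
    using good_move by blast
  show ?case using good_trans[of n "g1 @ a # al" "g1 @ a # b1 @ b2" s1 "g1 @ bl" s2] s1 s2 bl by auto
qed

theorem lemma2p4:
  fixes n :: nat and \<alpha> \<beta> :: "nat list"
  assumes "\<alpha> \<in> Comp n" and "\<beta> \<in> Comp n"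
    and "underlying_partition \<alpha> = underlying_partition \<beta>"
  shows "(R_ideal n \<alpha> :: ((nat \<Rightarrow> nat) \<Rightarrow> 'k::comm_ring_1) set) = R_ideal n \<beta>"
proof -
  have "sort \<alpha> = sort \<beta>" using assms(3) unfolding underlying_partition_def by simp
  then have m: "mset \<alpha> = mset \<beta>" by (metis mset_sort)
  have sa: "sum_list \<alpha> = n" and sb: "sum_list \<beta> = n" using assms(1,2) unfolding Comp_def by auto
  obtain s1 where s1: "good n \<alpha> \<beta> s1" using good_mset[OF m, of "[]" n] sa by auto
  obtain s2 where s2: "good n \<beta> \<alpha> s2" using good_mset[OF m[symmetric], of "[]" n] sb by auto
  show ?thesis using R_sub[OF s1] R_sub[OF s2] by blast
qed

end
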